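(* Let $d\ge2$, let $\Omega=\{x\in\mathbb R^d:\ \ell_j(x)>b_j,\ j=1,\dots,m\}$ be a nonempty bounded open convex polytope, and let $E\subset\mathbb R^d$ carry a Borel probability measure $\mu$ such that $(E,\mu)$ is weakly incoming to $\Omega$. Let $x_0\in\overline\Omega$ and $k=\mathrm c(x_0)$. Then there exist $\epsilon>0$ and measurable subsets $F_1,\dots,F_k\subset E$ with $\mu(F_i)>0$ for all $i$, such that: (a) there exist $r_0>0$ and $I\subset\{1,\dots,m\}$ with $\#I=k$ such that $\Omega\cap B(x_0,r_0)=\big(\bigcap_{i\in I}H_i^+\big)\cap B(x_0,r_0)$; (b) there exist $\theta_1,\dots,\theta_k\in\{\pm1\}$ and a bijection $\{1,\dots,k\}\ni n\mapsto i_n\in I$ such that for every $n\in\{1,\dots,k\}$ and every $f_n\in F_n$, $\theta_nf_n$ is strictly incoming to $H_{i_n}$ and $\theta_nf_n$ is incoming to $H_{i_m}$ for all $m>n$. Moreover, the sets $F_1,\dots,F_k$ can be chosen with arbitrarily small diameter.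
   Context: $\ell_j$ are linear forms and $b_j$ reals; $B(x_0,r)$ is the open ball. Define $\mathrm c(x)=0$ for $x\in\Omega$, $+\infty$ for $x\notin\overline\Omega$, $\#\{i:\ell_i(x)=b_i\}$ for $x\in\partial\Omega$. $(E,\mu)$ is weakly incoming to $\Omega$ if for every $x_0\in\partial\Omega$ there exist $\epsilon>0$, $\theta\in\{\pm1\}$ and a measurable $F\subset E$ with $\mu(F)>0$ such that $\mathrm c(x_0+\theta te)<\mathrm c(x_0)$ for all $t\in]0,\epsilon]$, $e\in F$. $H_k=\ker\ell_k$, $H_k^+=\{y:\ell_k(y)>b_k\}$, $\nu_k$ is the unit vector orthogonal to $H_k$ with $\ell_k(\nu_k)>0$. A nonzero vector $u$ is incoming to $H_k$ if $\langle u,\nu_k\rangle\ge0$ and strictly incoming if $\langle u,\nu_k\rangle>0$. *)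

theory Defs
  imports "HOL-Probability.Probability" "HOL-Library.Extended_Nat"
begin

definition polytope :: "(nat \<Rightarrow> 'a::euclidean_space \<Rightarrow> real) \<Rightarrow> (nat \<Rightarrow> real) \<Rightarrow> nat \<Rightarrow> 'a set" where
  "polytope l b m = {x. \<forall>j\<in>{1..m}. l j x > b j}"

definition cnt :: "(nat \<Rightarrow> 'a::euclidean_space \<Rightarrow> real) \<Rightarrow> (nat \<Rightarrow> real) \<Rightarrow> nat \<Rightarrow> 'a \<Rightarrow> enat" where
  "cnt l b m x =
     (if x \<in> polytope l b m then 0
      else if x \<notin> closure (polytope l b m) then \<infinity>
      else enat (card {i\<in>{1..m}. l i x = b i}))"

definition weakly_incoming ::
  "'a::euclidean_space measure \<Rightarrow> (nat \<Rightarrow> 'a \<Rightarrow> real) \<Rightarrow> (nat \<Rightarrow> real) \<Rightarrow> nat \<Rightarrow> bool" where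
  "weakly_incoming \<mu> l b m \<longleftrightarrow>
     (\<forall>x0\<in>frontier (polytope l b m). \<exists>\<epsilon>>0. \<exists>\<theta>\<in>{-1::real, 1}. \<exists>F\<in>sets \<mu>.
        emeasure \<mu> F > 0 \<and>
        (\<forall>t\<in>{0<..\<epsilon>}. \<forall>e\<in>F. cnt l b m (x0 + (\<theta> * t) *\<^sub>R e) < cnt l b m x0))"

definition Hplus :: "('a \<Rightarrow> real) \<Rightarrow> real \<Rightarrow> 'a set" where
  "Hplus lk bk = {y. lk y > bk}"

definition nu :: "('a::euclidean_space \<Rightarrow> real) \<Rightarrow> 'a" where
  "nu lk = (SOME v. norm v = 1 \<and> (\<forall>y. lk y = 0 \<longrightarrow> v \<bullet> y = 0) \<and> lk v > 0)"

definition incoming :: "'a::euclidean_space \<Rightarrow> ('a \<Rightarrow> real) \<Rightarrow> bool" where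
  "incoming u lk \<longleftrightarrow> u \<noteq> 0 \<and> u \<bullet> nu lk \<ge> 0"

definition strictly_incoming :: "'a::euclidean_space \<Rightarrow> ('a \<Rightarrow> real) \<Rightarrow> bool" where
  "strictly_incoming u lk \<longleftrightarrow> u \<noteq> 0 \<and> u \<bullet> nu lk > 0"

end

theory Submission
  imports Defs
begin

lemma nu_char:
  fixes l :: "'a::euclidean_space \<Rightarrow> real"
  assumes lin: "linear l" and nz: "l y0 \<noteq> 0"
  shows "\<exists>\<alpha>>0. \<forall>u. nu l \<bullet> u = \<alpha> * l u"
proof -
  define w where "w = adjoint l 1"
  have lw: "l u = w \<bullet> u" for u
    using adjoint_works[OF lin, of u 1] by (simp add: w_def inner_commute)
  have wnz: "w \<noteq> 0" using nz lw[of y0] by auto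
  define v where "v = w /\<^sub>R norm w"
  have "norm v = 1 \<and> (\<forall>y. l y = 0 \<longrightarrow> v \<bullet> y = 0) \<and> l v > 0"
    unfolding v_def using wnz by (auto simp: lw inner_commute)
  hence nuP: "norm (nu l) = 1 \<and> (\<forall>y. l y = 0 \<longrightarrow> nu l \<bullet> y = 0) \<and> l (nu l) > 0"
    unfolding nu_def by (rule someI)
  define \<nu> where "\<nu> = nu l"
  define \<alpha> where "\<alpha> = (\<nu> \<bullet> w) / (w \<bullet> w)"
  define r where "r = \<nu> - \<alpha> *\<^sub>R w"
  have ww: "w \<bullet> w > 0" using wnz by simp
  have rw: "r \<bullet> w = 0" unfolding r_def \<alpha>_def using ww by (simp add: inner_diff_left)
  then have "l r = 0" using lw inner_commute by metis
  then have "\<nu> \<bullet> r = 0" using nuP \<nu>_def by auto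
  then have "r \<bullet> r = 0" using rw unfolding r_def by (simp add: inner_diff_left inner_diff_right inner_commute)
  then have "r = 0" by simp
  then have nuw: "\<nu> = \<alpha> *\<^sub>R w" unfolding r_def by simp
  have "l \<nu> = \<alpha> * (w \<bullet> w)" using lw nuw by simp
  then have "\<alpha> > 0" using nuP \<nu>_def ww by (metis zero_less_mult_pos2)
  moreover have "\<forall>u. nu l \<bullet> u = \<alpha> * l u" using nuw \<nu>_def lw by simp
  ultimately show ?thesis by blast
qed

lemma lin_cont: "linear (f :: 'a::euclidean_space \<Rightarrow> real) \<Longrightarrow> continuous_on S f"
  by (simp add: linear_continuous_on linear_conv_bounded_linear)

lemma open_poly:
  assumes lin: "\<forall>j\<in>{1..m}. linear (l j)"
  shows "open (polytope l b m)"
proof -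
  have "polytope l b m = (\<Inter>j\<in>{1..m}. {x. b j < l j x})" unfolding polytope_def by auto
  moreover have "open {x. b j < l j x}" if "j \<in> {1..m}" for j
    using lin that by (intro open_Collect_less continuous_on_const) (auto intro: lin_cont)
  ultimately show ?thesis by auto
qed

lemma closure_poly:
  assumes lin: "\<forall>j\<in>{1..m}. linear (l j)" and ne: "polytope l b m \<noteq> {}"
  shows "closure (polytope l b m) = {x. \<forall>j\<in>{1..m}. l j x \<ge> b j}"
proof
  have "{x. \<forall>j\<in>{1..m}. l j x \<ge> b j} = (\<Inter>j\<in>{1..m}. {x. b j \<le> l j x})" by auto
  moreover have "closed {x. b j \<le> l j x}" if "j \<in> {1..m}" for j
    using lin that by (intro closed_Collect_le continuous_on_const) (auto intro: lin_cont)
  ultimately have "closed {x. \<forall>j\<in>{1..m}. l j x \<ge> b j}" by auto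
  then show "closure (polytope l b m) \<subseteq> {x. \<forall>j\<in>{1..m}. l j x \<ge> b j}"
    by (rule closure_minimal[rotated]) (auto simp: polytope_def less_imp_le)
next
  obtain p where p: "p \<in> polytope l b m" using ne by auto
  show "{x. \<forall>j\<in>{1..m}. l j x \<ge> b j} \<subseteq> closure (polytope l b m)"
  proof
    fix y assume y: "y \<in> {x. \<forall>j\<in>{1..m}. l j x \<ge> b j}"
    show "y \<in> closure (polytope l b m)"
      unfolding closure_approachable
    proof (intro allI impI)
      fix e :: real assume e: "e > 0"
      define s where "s = min 1 (e / (2 * (norm (p - y) + 1)))"
      have s0: "0 < s" "s \<le> 1" using e unfolding s_def by (auto intro!: divide_pos_pos add_nonneg_pos)
      define z where "z = y + s *\<^sub>R (p - y)"
      have "z \<in> polytope l b m"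
        unfolding polytope_def
      proof safe
        fix j assume j: "j \<in> {1..m}"
        have "l j z = (1 - s) * l j y + s * l j p"
          using lin j unfolding z_def by (simp add: linear_add linear_cmul linear_diff algebra_simps)
        moreover have "l j y \<ge> b j" "l j p > b j" using y p j by (auto simp: polytope_def)
        moreover have "(1 - s) * b j \<le> (1 - s) * l j y" using s0 \<open>l j y \<ge> b j\<close> by (intro mult_left_mono) auto
        moreover have "s * b j < s * l j p" using s0 \<open>l j p > b j\<close> by (intro mult_strict_left_mono) auto
        moreover have "(1 - s) * b j + s * b j = b j" by (simp add: left_diff_distrib)
        ultimately show "b j < l j z" by linarith
      qed
      moreover have "dist z y < e"
      proof -
        have "dist z y = s * norm (p - y)" unfolding z_def dist_norm using s0 by simp
        also have "\<dots> \<le> (e / (2 * (norm (p - y) + 1))) * norm (p - y)"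
          by (rule mult_right_mono) (auto simp: s_def)
        also have "\<dots> = e * (norm (p - y) / (2 * (norm (p - y) + 1)))" by simp
        also have "\<dots> < e * 1"
        proof (rule mult_strict_left_mono[OF _ e])
          have "norm (p - y) < 2 * (norm (p - y) + 1)" by (smt (verit) norm_ge_zero)
          then show "norm (p - y) / (2 * (norm (p - y) + 1)) < 1"
            by (subst divide_less_eq_1_pos) (auto intro: add_nonneg_pos)
        qed
        finally show ?thesis by simp
      qed
      ultimately show "\<exists>z\<in>polytope l b m. dist z y < e" by blast
    qed
  qed
qed

lemma inc_iff:
  fixes l :: "'a::euclidean_space \<Rightarrow> real"
  assumes lin: "linear l" and nz: "l y0 \<noteq> 0"
  shows "incoming u l \<longleftrightarrow> u \<noteq> 0 \<and> l u \<ge> 0"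
    and "strictly_incoming u l \<longleftrightarrow> u \<noteq> 0 \<and> l u > 0"
proof -
  obtain \<alpha> where a: "\<alpha> > 0" "\<forall>u. nu l \<bullet> u = \<alpha> * l u" using nu_char[OF lin nz] by blast
  have e: "u \<bullet> nu l = \<alpha> * l u" using a by (simp add: inner_commute)
  show "incoming u l \<longleftrightarrow> u \<noteq> 0 \<and> l u \<ge> 0"
    unfolding incoming_def e using a by (simp add: zero_le_mult_iff)
  show "strictly_incoming u l \<longleftrightarrow> u \<noteq> 0 \<and> l u > 0"
    unfolding strictly_incoming_def e using a by (simp add: zero_less_mult_iff)
qed

lemma bij_concat:
  fixes p q :: nat
  assumes g: "bij_betw g {1..p} P" and h: "bij_betw h {1..q} Z" and d: "P \<inter> Z = {}"
  shows "bij_betw (\<lambda>n. if n \<le> p then g n else h (n - p)) {1..p+q} (P \<union> Z)"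
proof -
  have s: "{1..p+q} = {1..p} \<union> {p+1..p+q}" by (auto simp: atLeastAtMost_iff)
  have 1: "bij_betw (\<lambda>n. if n \<le> p then g n else h (n - p)) {1..p} P"
    using g by (rule bij_betw_cong[THEN iffD1, rotated]) auto
  have "bij_betw (\<lambda>n. n - p) {p+1..p+q} {1..q}"
    by (rule bij_betw_byWitness[where f'="\<lambda>n. n + p"]) auto
  then have "bij_betw (h \<circ> (\<lambda>n. n - p)) {p+1..p+q} Z" using h by (rule bij_betw_trans)
  then have 2: "bij_betw (\<lambda>n. if n \<le> p then g n else h (n - p)) {p+1..p+q} Z"
    by (rule bij_betw_cong[THEN iffD1, rotated]) auto
  show ?thesis unfolding s by (rule bij_betw_combine[OF 1 2 d])
qed

lemma small_t:
  fixes a c :: "nat \<Rightarrow> real"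
  assumes "finite J" "\<forall>j\<in>J. a j > 0"
  shows "\<exists>t>0. \<forall>j\<in>J. t * c j < a j"
proof -
  have "\<forall>j\<in>J. eventually (\<lambda>t. t * c j < a j) (at_right 0)"
  proof
    fix j assume j: "j \<in> J"
    have "((\<lambda>t. t * c j) \<longlongrightarrow> 0 * c j) (at_right 0)"
      by (intro tendsto_intros)
    then show "eventually (\<lambda>t. t * c j < a j) (at_right 0)"
      using assms j by (auto dest: order_tendstoD(2))
  qed
  then have "eventually (\<lambda>t. \<forall>j\<in>J. t * c j < a j) (at_right 0)"
    using assms(1) by (rule eventually_ball_finite[rotated])
  then have "eventually (\<lambda>t. 0 < t \<and> (\<forall>j\<in>J. t * c j < a j)) (at_right (0::real))"
    using eventually_conj[OF eventually_at_right_less] by blast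
  then show ?thesis
    using eventually_happens'[OF trivial_limit_at_right_real] by blast
qed

lemma meas_int:
  assumes sp: "space \<mu> = E" and sets: "sets \<mu> = sets (restrict_space borel E)"
    and F: "F \<in> sets \<mu>" and S: "S \<in> sets borel"
  shows "F \<inter> S \<in> sets \<mu>"
proof -
  have "E \<inter> S \<in> sets \<mu>" unfolding sets sets_restrict_space using S by auto
  moreover have "F \<subseteq> E" using sets.sets_into_space[OF F] sp by simp
  ultimately have "F \<inter> (E \<inter> S) \<in> sets \<mu>" using F by auto
  moreover have "F \<inter> (E \<inter> S) = F \<inter> S" using \<open>F \<subseteq> E\<close> by auto
  ultimately show ?thesis by simp
qed

lemma main:
  fixes l :: "nat \<Rightarrow> 'a::euclidean_space \<Rightarrow> real" and b :: "nat \<Rightarrow> real" and m :: nat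
    and E :: "'a set" and \<mu> :: "'a measure" and \<delta> :: real
  assumes lin: "\<forall>j\<in>{1..m}. linear (l j)"
    and ne: "polytope l b m \<noteq> {}"
    and sp: "space \<mu> = E"
    and sets: "sets \<mu> = sets (restrict_space borel E)"
    and wi: "weakly_incoming \<mu> l b m"
    and \<delta>: "\<delta> > 0"
  shows "(\<forall>j\<in>{1..m}. l j x \<ge> b j) \<Longrightarrow> card {i\<in>{1..m}. l i x = b i} = k \<Longrightarrow>
   \<exists>F \<theta> idx. (\<forall>n\<in>{1..k}. F n \<in> sets \<mu> \<and> emeasure \<mu> (F n) > 0 \<and> bounded (F n) \<and> diameter (F n) < \<delta>) \<and>
     (\<forall>n\<in>{1..k}. \<theta> n \<in> {-1::real, 1}) \<and> bij_betw idx {1..k} {i\<in>{1..m}. l i x = b i} \<and>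
     (\<forall>n\<in>{1..k}. \<forall>f\<in>F n. strictly_incoming (\<theta> n *\<^sub>R f) (l (idx n)) \<and>
        (\<forall>m'\<in>{n<..k}. incoming (\<theta> n *\<^sub>R f) (l (idx m'))))"
proof (induction k arbitrary: x rule: less_induct)
  case (less k x)
  define A where "A = {i\<in>{1..m}. l i x = b i}"
  have finA: "finite A" unfolding A_def by auto
  have cardA: "card A = k" using less.prems A_def by simp
  obtain p where p: "p \<in> polytope l b m" using ne by auto
  have nzA: "\<exists>y0. l i y0 \<noteq> 0" if "i \<in> A" for i
  proof -
    have "l i p > b i" "l i x = b i" using p that by (auto simp: A_def polytope_def)
    then show ?thesis by (metis less_irrefl)
  qed
  have linA: "linear (l i)" if "i \<in> A" for i using lin that by (auto simp: A_def)
  have clos: "closure (polytope l b m) = {x. \<forall>j\<in>{1..m}. l j x \<ge> b j}"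
    by (rule closure_poly[OF lin ne])
  have linx: "l j (y + c *\<^sub>R e) = l j y + c * l j e" if "j \<in> {1..m}" for j y c e
    using lin that by (simp add: linear_add linear_cmul)
  show ?case
  proof (cases "k = 0")
    case True
    then have "A = {}" using cardA finA by simp
    then show ?thesis unfolding A_def[symmetric] using True
      by (intro exI[of _ "\<lambda>_. {}"] exI[of _ "\<lambda>_. 1"] exI[of _ id]) (auto simp: bij_betw_def)
  next
    case False
    then have Ane: "A \<noteq> {}" using cardA by auto
    have xcl: "x \<in> closure (polytope l b m)" using clos less.prems by auto
    have xnO: "x \<notin> polytope l b m"
    proof
      assume "x \<in> polytope l b m"
      moreover obtain i where "i \<in> A" using Ane by auto
      ultimately show False unfolding A_def polytope_def by (metis (mono_tags, lifting) less_irrefl mem_Collect_eq)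
    qed
    have "x \<in> frontier (polytope l b m)"
      using xcl xnO by (simp add: frontier_def interior_open[OF open_poly[OF lin]])
    then obtain \<epsilon> \<theta> F where \<epsilon>: "\<epsilon> > 0" and \<theta>: "\<theta> \<in> {-1::real, 1}" and F: "F \<in> sets \<mu>"
      and Fpos: "emeasure \<mu> F > 0"
      and Fdec: "\<forall>t\<in>{0<..\<epsilon>}. \<forall>e\<in>F. cnt l b m (x + (\<theta> * t) *\<^sub>R e) < cnt l b m x"
      using wi unfolding weakly_incoming_def by blast
    have cntx: "cnt l b m x = enat k" using xcl xnO cardA by (simp add: cnt_def A_def)
    have key: "(\<forall>i\<in>A. \<theta> * l i e \<ge> 0) \<and> (\<exists>i\<in>A. \<theta> * l i e > 0)" if e: "e \<in> F" for e
    proof -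
      define y where "y = x + (\<theta> * \<epsilon>) *\<^sub>R e"
      have lt: "cnt l b m y < enat k" using Fdec e \<epsilon> cntx unfolding y_def by auto
      then have ycl: "y \<in> closure (polytope l b m)" by (auto simp: cnt_def closure_subset[THEN subsetD] split: if_splits)
      have ly: "l i y = l i x + \<epsilon> * (\<theta> * l i e)" if "i \<in> {1..m}" for i
        using linx[OF that] unfolding y_def by (simp add: algebra_simps)
      have ge: "\<theta> * l i e \<ge> 0" if i: "i \<in> A" for i
      proof -
        have "i \<in> {1..m}" "l i x = b i" using i by (auto simp: A_def)
        moreover have "l i y \<ge> b i" using ycl clos \<open>i \<in> {1..m}\<close> by auto
        ultimately have "\<epsilon> * (\<theta> * l i e) \<ge> 0" using ly by auto
        then show ?thesis using \<epsilon> by (simp add: zero_le_mult_iff)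
      qed
      moreover have "\<exists>i\<in>A. \<theta> * l i e > 0"
      proof (rule ccontr)
        assume "\<not> ?thesis"
        then have z: "\<theta> * l i e = 0" if "i \<in> A" for i using ge that by force
        have sub: "A \<subseteq> {i\<in>{1..m}. l i y = b i}" using z ly by (auto simp: A_def)
        have "y \<notin> polytope l b m"
        proof
          assume "y \<in> polytope l b m"
          moreover obtain i where "i \<in> A" using Ane by auto
          ultimately show False using sub unfolding polytope_def by (metis (mono_tags, lifting) less_irrefl mem_Collect_eq subsetD)
        qed
        then have "cnt l b m y = enat (card {i\<in>{1..m}. l i y = b i})"
          using ycl by (simp add: cnt_def)
        moreover have "card A \<le> card {i\<in>{1..m}. l i y = b i}" using sub by (intro card_mono) auto
        ultimately show False using lt cardA by simp
      qed
      ultimately show ?thesis by blast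
    qed
    have oF: "open S" if "S \<in> range (\<lambda>c::'a. ball c (\<delta>/3))" for S using that by auto
    obtain \<B> :: "'a set set" where \<B>: "\<B> \<subseteq> range (\<lambda>c. ball c (\<delta>/3))" "countable \<B>" "\<Union>\<B> = \<Union>(range (\<lambda>c. ball c (\<delta>/3)))"
      by (rule Lindelof[of "range (\<lambda>c::'a. ball c (\<delta>/3))", OF oF]) blast
    have cov: "\<exists>B\<in>\<B>. e \<in> B" for e
    proof -
      have "e \<in> ball e (\<delta>/3)" using \<delta> by simp
      then have "e \<in> \<Union>(range (\<lambda>c::'a. ball c (\<delta>/3)))" by blast
      then show ?thesis using \<B>(3) by blast
    qed
    define Sg where "Sg P = {e. \<forall>i\<in>A. (0 < \<theta> * l i e) = (i \<in> P)}" for P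
    define S where "S PB = F \<inter> (Sg (fst PB) \<inter> snd PB)" for PB
    have Sgb: "Sg P \<in> sets borel" for P
    proof -
      have o: "open {e. 0 < \<theta> * l i e}" if "i \<in> A" for i
        using linA[OF that] by (intro open_Collect_less continuous_on_const continuous_on_mult lin_cont) auto
      have eq: "Sg P = (\<Inter>i\<in>A. if i \<in> P then {e. 0 < \<theta> * l i e} else - {e. 0 < \<theta> * l i e})"
        unfolding Sg_def using Ane by auto
      show ?thesis unfolding eq using o finA Ane
        by (intro sets.finite_INT) (auto intro!: borel_open borel_comp)
    qed
    have Smeas: "S PB \<in> sets \<mu>" if "PB \<in> Pow A \<times> \<B>" for PB
    proof -
      have "snd PB \<in> sets borel" using that \<B>(1) by auto
      then have "Sg (fst PB) \<inter> snd PB \<in> sets borel" using Sgb by auto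
      then show ?thesis unfolding S_def by (rule meas_int[OF sp sets F])
    qed
    have "\<exists>PB\<in>Pow A \<times> \<B>. emeasure \<mu> (S PB) > 0"
    proof (rule ccontr)
      assume "\<not> ?thesis"
      then have "S PB \<in> null_sets \<mu>" if "PB \<in> Pow A \<times> \<B>" for PB
        using Smeas[OF that] that by (auto simp: null_sets_def not_less)
      then have N: "(\<Union>PB\<in>Pow A \<times> \<B>. S PB) \<in> null_sets \<mu>"
        using \<B>(2) finA by (intro null_sets_UN') (auto intro: countable_finite)
      have "F \<subseteq> (\<Union>PB\<in>Pow A \<times> \<B>. S PB)"
      proof
        fix e assume e: "e \<in> F"
        obtain B where B: "B \<in> \<B>" "e \<in> B" using cov by blast
        have "e \<in> S ({i\<in>A. 0 < \<theta> * l i e}, B)" using e B by (auto simp: S_def Sg_def)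
        moreover have "({i\<in>A. 0 < \<theta> * l i e}, B) \<in> Pow A \<times> \<B>" using B by auto
        ultimately show "e \<in> (\<Union>PB\<in>Pow A \<times> \<B>. S PB)" by blast
      qed
      then have "F \<in> null_sets \<mu>" using null_sets_subset[OF N F] by blast
      then show False using Fpos by auto
    qed
    then obtain P B where PB: "P \<subseteq> A" "B \<in> \<B>" and Gpos: "emeasure \<mu> (S (P, B)) > 0" by auto
    define G where "G = S (P, B)"
    obtain c where Bc: "B = ball c (\<delta>/3)" using PB \<B>(1) by auto
    have Gm: "G \<in> sets \<mu>" unfolding G_def using PB by (intro Smeas) auto
    have Gpos': "emeasure \<mu> G > 0" using Gpos G_def by simp
    have Gsub: "G \<subseteq> ball c (\<delta>/3)" using Bc by (auto simp: G_def S_def)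
    have Gb: "bounded G" using Gsub bounded_subset by blast
    have Gd: "diameter G < \<delta>"
    proof -
      have "diameter G \<le> diameter (ball c (\<delta>/3))" by (rule diameter_subset[OF Gsub]) auto
      also have "\<dots> < \<delta>" using \<delta> by simp
      finally show ?thesis .
    qed
    have GF: "G \<subseteq> F" by (auto simp: G_def S_def)
    have GP: "\<forall>i\<in>A. (0 < \<theta> * l i e) = (i \<in> P)" if "e \<in> G" for e
      using that by (auto simp: G_def S_def Sg_def)
    obtain e0 where e0: "e0 \<in> G" using Gpos' by (metis emeasure_empty equals0I less_irrefl)
    have Pne: "P \<noteq> {}" using key[of e0] GF e0 GP[OF e0] by auto
    define Z where "Z = A - P"
    have finP: "finite P" using finA PB finite_subset by blast
    have cardZ: "card Z + card P = k" unfolding Z_def using PB finP cardA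
      by (metis card_Diff_subset card_mono finA le_add_diff_inverse2)
    have cardP: "card P > 0" using Pne finP by auto
    have "\<exists>t>0. \<forall>j\<in>{1..m} - A. t * (- (\<theta> * l j e0)) < l j x - b j"
      using less.prems by (intro small_t) (auto simp: A_def order_le_less)
    then obtain t where t: "t > 0" and tj: "\<forall>j\<in>{1..m} - A. t * (- (\<theta> * l j e0)) < l j x - b j"
      by blast
    define x1 where "x1 = x + (t * \<theta>) *\<^sub>R e0"
    have lx1: "l j x1 = l j x + t * (\<theta> * l j e0)" if "j \<in> {1..m}" for j
      using linx[OF that] unfolding x1_def by (simp add: algebra_simps)
    have keye0: "\<forall>i\<in>A. \<theta> * l i e0 \<ge> 0" using key GF e0 by blast
    have x1ge: "\<forall>j\<in>{1..m}. l j x1 \<ge> b j"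
    proof
      fix j assume j: "j \<in> {1..m}"
      show "l j x1 \<ge> b j"
      proof (cases "j \<in> A")
        case True
        then show ?thesis using lx1[OF j] keye0 t by (auto simp: A_def)
      next
        case False
        then have "t * (- (\<theta> * l j e0)) < l j x - b j" using tj j by blast
        then show ?thesis using lx1[OF j] by simp
      qed
    qed
    have actx1: "{i\<in>{1..m}. l i x1 = b i} = Z"
    proof safe
      fix i assume i: "i \<in> {1..m}" "l i x1 = b i"
      have iA: "i \<in> A"
      proof (rule ccontr)
        assume "i \<notin> A"
        then have "t * (- (\<theta> * l i e0)) < l i x - b i" using tj i by blast
        then show False using lx1[OF i(1)] i(2) by simp
      qed
      then have "t * (\<theta> * l i e0) = 0" using lx1[OF i(1)] i by (auto simp: A_def)
      then have "\<not> (0 < \<theta> * l i e0)" using t by (metis less_irrefl mult_eq_0_iff)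
      then show "i \<in> Z" using GP[OF e0] iA by (auto simp: Z_def)
    next
      fix i assume "i \<in> Z"
      then show "i \<in> {1..m}" by (auto simp: Z_def A_def)
    next
      fix i assume i: "i \<in> Z"
      then have iA: "i \<in> A" "i \<notin> P" by (auto simp: Z_def)
      then have "\<theta> * l i e0 = 0" using GP[OF e0] keye0 by force
      then show "l i x1 = b i" using lx1 iA by (auto simp: A_def)
    qed
    have "card Z < k" using cardZ cardP by linarith
    then obtain F' \<theta>' idx' where
      IH1: "\<forall>n\<in>{1..card Z}. F' n \<in> sets \<mu> \<and> emeasure \<mu> (F' n) > 0 \<and> bounded (F' n) \<and> diameter (F' n) < \<delta>"
      and IH2: "\<forall>n\<in>{1..card Z}. \<theta>' n \<in> {-1::real, 1}"
      and IH3: "bij_betw idx' {1..card Z} Z"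
      and IH4: "\<forall>n\<in>{1..card Z}. \<forall>f\<in>F' n. strictly_incoming (\<theta>' n *\<^sub>R f) (l (idx' n)) \<and>
        (\<forall>m'\<in>{n<..card Z}. incoming (\<theta>' n *\<^sub>R f) (l (idx' m')))"
      using less.IH[of "card Z" x1] x1ge actx1 by auto
    obtain g where g: "bij_betw g {1..card P} P" using ex_bij_betw_nat_finite_1[OF finP] by blast
    define p where "p = card P"
    define q where "q = card Z"
    have kpq: "k = p + q" using cardZ p_def q_def by simp
    define idx where "idx n = (if n \<le> p then g n else idx' (n - p))" for n
    have bij: "bij_betw idx {1..k} A"
    proof -
      have "bij_betw idx {1..p+q} (P \<union> Z)" unfolding idx_def
        by (rule bij_concat) (use g IH3 p_def q_def Z_def in auto)
      moreover have "P \<union> Z = A" using PB Z_def by auto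
      ultimately show ?thesis using kpq by simp
    qed
    have idxA: "idx n \<in> A" if "n \<in> {1..k}" for n using bij that bij_betwE by blast
    define FF where "FF n = (if n \<le> p then G else F' (n - p))" for n
    define \<Theta> where "\<Theta> n = (if n \<le> p then \<theta> else \<theta>' (n - p))" for n
    show ?thesis unfolding A_def[symmetric]
    proof (intro exI[of _ FF] exI[of _ \<Theta>] exI[of _ idx] conjI)
      show "\<forall>n\<in>{1..k}. FF n \<in> sets \<mu> \<and> emeasure \<mu> (FF n) > 0 \<and> bounded (FF n) \<and> diameter (FF n) < \<delta>"
      proof
        fix n assume n: "n \<in> {1..k}"
        show "FF n \<in> sets \<mu> \<and> emeasure \<mu> (FF n) > 0 \<and> bounded (FF n) \<and> diameter (FF n) < \<delta>"
        proof (cases "n \<le> p")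
          case True then show ?thesis using Gm Gpos' Gb Gd by (simp add: FF_def)
        next
          case False
          then have "n - p \<in> {1..card Z}" using n kpq q_def by auto
          then have "F' (n - p) \<in> sets \<mu> \<and> emeasure \<mu> (F' (n - p)) > 0 \<and> bounded (F' (n - p)) \<and> diameter (F' (n - p)) < \<delta>"
            using IH1 by blast
          then show ?thesis using False by (simp add: FF_def)
        qed
      qed
      show "\<forall>n\<in>{1..k}. \<Theta> n \<in> {-1, 1}"
      proof
        fix n assume n: "n \<in> {1..k}"
        show "\<Theta> n \<in> {-1, 1}"
        proof (cases "n \<le> p")
          case True then show ?thesis using \<theta> by (simp add: \<Theta>_def)
        next
          case False
          then have "n - p \<in> {1..card Z}" using n kpq q_def by auto
          then have "\<theta>' (n - p) \<in> {-1, 1}" using IH2 by blast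
          then show ?thesis using False by (simp add: \<Theta>_def)
        qed
      qed
      show "bij_betw idx {1..k} A" by (rule bij)
      show "\<forall>n\<in>{1..k}. \<forall>f\<in>FF n. strictly_incoming (\<Theta> n *\<^sub>R f) (l (idx n)) \<and>
        (\<forall>m'\<in>{n<..k}. incoming (\<Theta> n *\<^sub>R f) (l (idx m')))"
      proof (intro ballI)
      fix n f assume n: "n \<in> {1..k}" and f: "f \<in> FF n"
      show "strictly_incoming (\<Theta> n *\<^sub>R f) (l (idx n)) \<and>
        (\<forall>m'\<in>{n<..k}. incoming (\<Theta> n *\<^sub>R f) (l (idx m')))"
      proof (cases "n \<le> p")
        case True
        then have fG: "f \<in> G" and Th: "\<Theta> n = \<theta>" and idn: "idx n = g n"
          using f by (auto simp: FF_def \<Theta>_def idx_def)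
        have gn: "g n \<in> P" using g True n p_def bij_betwE by fastforce
        have gA: "g n \<in> A" using gn PB by auto
        have lsc: "l i (\<theta> *\<^sub>R f) = \<theta> * l i f" if "i \<in> A" for i
          using linA[OF that] by (simp add: linear_cmul)
        have pos: "\<theta> * l (g n) f > 0" using GP[OF fG] gA gn by auto
        have nz: "\<theta> *\<^sub>R f \<noteq> 0"
        proof
          assume "\<theta> *\<^sub>R f = 0"
          then have "l (g n) (\<theta> *\<^sub>R f) = 0" using linA[OF gA] by (metis linear_0)
          then show False using pos lsc[OF gA] by (metis less_irrefl)
        qed
        obtain y0 where y0: "l (g n) y0 \<noteq> 0" using nzA[OF gA] by blast
        have s: "strictly_incoming (\<theta> *\<^sub>R f) (l (g n))"
          unfolding inc_iff(2)[OF linA[OF gA] y0] using nz pos lsc[OF gA] by simp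
        have "incoming (\<theta> *\<^sub>R f) (l (idx m'))" if m': "m' \<in> {n<..k}" for m'
        proof -
          have iA: "idx m' \<in> A" using idxA m' n by auto
          obtain y1 where y1: "l (idx m') y1 \<noteq> 0" using nzA[OF iA] by blast
          have "\<theta> * l (idx m') f \<ge> 0" using key GF fG iA by blast
          then show ?thesis unfolding inc_iff(1)[OF linA[OF iA] y1] using nz lsc[OF iA] by simp
        qed
        then show ?thesis using s Th idn by simp
      next
        case False
        then have n': "n - p \<in> {1..card Z}" using n kpq q_def by auto
        have fF: "f \<in> F' (n - p)" and Th: "\<Theta> n = \<theta>' (n - p)" and idn: "idx n = idx' (n - p)"
          using f False by (auto simp: FF_def \<Theta>_def idx_def)
        have IHn: "strictly_incoming (\<theta>' (n - p) *\<^sub>R f) (l (idx' (n - p))) \<and>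
          (\<forall>m'\<in>{n - p<..card Z}. incoming (\<theta>' (n - p) *\<^sub>R f) (l (idx' m')))"
          using IH4 n' fF by blast
        have "\<forall>m'\<in>{n<..k}. incoming (\<Theta> n *\<^sub>R f) (l (idx m'))"
        proof
          fix m' assume m': "m' \<in> {n<..k}"
          then have mm: "m' - p \<in> {n - p<..card Z}" "\<not> m' \<le> p" using False kpq q_def by auto
          then have "idx m' = idx' (m' - p)" by (simp add: idx_def)
          then show "incoming (\<Theta> n *\<^sub>R f) (l (idx m'))"
            using IHn mm(1) Th by simp
        qed
        then show ?thesis using IHn Th idn by simp
      qed
      qed
    qed
  qed
qed


theorem proposition5p4:
  fixes l :: "nat \<Rightarrow> 'a::euclidean_space \<Rightarrow> real" and b :: "nat \<Rightarrow> real" and m :: nat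
    and E :: "'a set" and \<mu> :: "'a measure" and x0 :: 'a and k :: nat
  assumes dim: "DIM('a) \<ge> 2"
    and lin: "\<forall>j\<in>{1..m}. linear (l j)"
    and ne: "polytope l b m \<noteq> {}"
    and bdd: "bounded (polytope l b m)"
    and sp: "space \<mu> = E"
    and sets: "sets \<mu> = sets (restrict_space borel E)"
    and prob: "prob_space \<mu>"
    and wi: "weakly_incoming \<mu> l b m"
    and x0: "x0 \<in> closure (polytope l b m)"
    and k: "cnt l b m x0 = enat k"
  shows "\<forall>\<delta>>0. \<exists>\<epsilon>>(0::real). \<exists>F :: nat \<Rightarrow> 'a set.
     (\<forall>n\<in>{1..k}. F n \<in> sets \<mu> \<and> emeasure \<mu> (F n) > 0 \<and> bounded (F n) \<and> diameter (F n) < \<delta>) \<and>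
     (\<exists>r0>0. \<exists>I. I \<subseteq> {1..m} \<and> card I = k \<and>
        polytope l b m \<inter> ball x0 r0 = (\<Inter>i\<in>I. Hplus (l i) (b i)) \<inter> ball x0 r0 \<and>
        (\<exists>\<theta> :: nat \<Rightarrow> real. \<exists>idx :: nat \<Rightarrow> nat.
           (\<forall>n\<in>{1..k}. \<theta> n \<in> {-1, 1}) \<and> bij_betw idx {1..k} I \<and>
           (\<forall>n\<in>{1..k}. \<forall>f\<in>F n.
              strictly_incoming (\<theta> n *\<^sub>R f) (l (idx n)) \<and>
              (\<forall>m'\<in>{n<..k}. incoming (\<theta> n *\<^sub>R f) (l (idx m'))))))"
proof (intro allI impI)
  fix \<delta> :: real assume \<delta>: "\<delta> > 0"
  define A where "A = {i\<in>{1..m}. l i x0 = b i}"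
  have ge: "\<forall>j\<in>{1..m}. l j x0 \<ge> b j" using x0 closure_poly[OF lin ne] by auto
  have cardA: "card A = k"
  proof (cases "x0 \<in> polytope l b m")
    case True
    have "A = {}"
    proof (rule ccontr)
      assume "A \<noteq> {}"
      then obtain i where i: "i \<in> A" by blast
      then have i1: "i \<in> {1..m}" and i2: "l i x0 = b i" unfolding A_def by auto
      have "b i < l i x0" using True i1 unfolding polytope_def by blast
      then show False using i2 by simp
    qed
    moreover have "k = 0" using True k by (simp add: cnt_def zero_enat_def)
    ultimately show ?thesis by simp
  next
    case False
    then show ?thesis using k x0 by (simp add: cnt_def A_def)
  qed
  obtain F \<theta> idx where
    M1: "\<forall>n\<in>{1..k}. F n \<in> sets \<mu> \<and> emeasure \<mu> (F n) > 0 \<and> bounded (F n) \<and> diameter (F n) < \<delta>"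
    and M2: "\<forall>n\<in>{1..k}. \<theta> n \<in> {-1::real, 1}" and M3: "bij_betw idx {1..k} A"
    and M4: "\<forall>n\<in>{1..k}. \<forall>f\<in>F n. strictly_incoming (\<theta> n *\<^sub>R f) (l (idx n)) \<and>
        (\<forall>m'\<in>{n<..k}. incoming (\<theta> n *\<^sub>R f) (l (idx m')))"
    using main[OF lin ne sp sets wi \<delta>, of x0 k] ge cardA unfolding A_def by blast
  define U where "U = (\<Inter>j\<in>{1..m} - A. {x. b j < l j x})"
  have "open U" unfolding U_def
  proof (intro open_INT ballI)
    fix j assume j: "j \<in> {1..m} - A"
    then have "linear (l j)" using lin by auto
    then show "open {x. b j < l j x}" by (intro open_Collect_less continuous_on_const lin_cont)
  qed auto
  moreover have "x0 \<in> U" using ge by (auto simp: U_def A_def order_le_less)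
  ultimately obtain r0 where r0: "r0 > 0" "ball x0 r0 \<subseteq> U" by (meson open_contains_ball)
  have loc: "polytope l b m \<inter> ball x0 r0 = (\<Inter>i\<in>A. Hplus (l i) (b i)) \<inter> ball x0 r0"
  proof (intro set_eqI iffI)
    fix y assume "y \<in> polytope l b m \<inter> ball x0 r0"
    then show "y \<in> (\<Inter>i\<in>A. Hplus (l i) (b i)) \<inter> ball x0 r0"
      by (auto simp: polytope_def Hplus_def A_def)
  next
    fix y assume y: "y \<in> (\<Inter>i\<in>A. Hplus (l i) (b i)) \<inter> ball x0 r0"
    then have "y \<in> U" using r0 by auto
    then have "\<forall>j\<in>{1..m}. b j < l j y" using y by (auto simp: U_def Hplus_def)
    then show "y \<in> polytope l b m \<inter> ball x0 r0" using y by (auto simp: polytope_def)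
  qed
  have Asub: "A \<subseteq> {1..m}" by (auto simp: A_def)
  show "\<exists>\<epsilon>>(0::real). \<exists>F :: nat \<Rightarrow> 'a set.
     (\<forall>n\<in>{1..k}. F n \<in> sets \<mu> \<and> emeasure \<mu> (F n) > 0 \<and> bounded (F n) \<and> diameter (F n) < \<delta>) \<and>
     (\<exists>r0>0. \<exists>I. I \<subseteq> {1..m} \<and> card I = k \<and>
        polytope l b m \<inter> ball x0 r0 = (\<Inter>i\<in>I. Hplus (l i) (b i)) \<inter> ball x0 r0 \<and>
        (\<exists>\<theta> :: nat \<Rightarrow> real. \<exists>idx :: nat \<Rightarrow> nat.
           (\<forall>n\<in>{1..k}. \<theta> n \<in> {-1, 1}) \<and> bij_betw idx {1..k} I \<and>
           (\<forall>n\<in>{1..k}. \<forall>f\<in>F n.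
              strictly_incoming (\<theta> n *\<^sub>R f) (l (idx n)) \<and>
              (\<forall>m'\<in>{n<..k}. incoming (\<theta> n *\<^sub>R f) (l (idx m'))))))"
    apply (rule exI[of _ "1::real"])
    apply (rule conjI, simp)
    apply (rule exI[of _ F])
    apply (rule conjI[OF M1])
    apply (rule exI[of _ r0])
    apply (rule conjI[OF r0(1)])
    apply (rule exI[of _ A])
    apply (rule conjI[OF Asub], rule conjI[OF cardA], rule conjI[OF loc])
    apply (rule exI[of _ \<theta>], rule exI[of _ idx])
    apply (rule conjI[OF M2], rule conjI[OF M3], rule M4)
    done
qed

end
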